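(* For all integers $n\ge 2$ and $M\ge 1$, $C_{CD}(n,M)\ge C_{AD}(n,M)\ge \frac{n}{2}\log_2 M$.
   Context: There are $n$ nodes labeled $1,\dots,n$; node $i$ privately holds an input $x_i\in\{1,\dots,M\}$. Communication is over private point-to-point links of a fully connected synchronous network. A deterministic protocol $P$ is a fixed finite schedule of steps $l=1,\dots,L(P)$; in step $l$ a prescribed node $T_l$ sends to a prescribed node $R_l\neq T_l$ one symbol $f_l(x_{T_l},T_l^+(l))$, where $T_l^+(l)$ is the sequence of symbols $T_l$ has received in steps $1,\dots,l-1$; only $R_l$ receives it. Its complexity is $C(P)=\sum_{l}\log_2 S_l(P)$, with $S_l(P)$ the number of distinct values of the step-$l$ symbol over all inputs in $\{1,\dots,M\}^n$. At the end each node $i$ outputs a bit $EQ_i$ depending on $x_i$ and the symbols it received. $P$ solves MEQ-AD$(n,M)$ if for every input, $EQ_1=\cdots=EQ_n=0$ iff $x_1=\cdots=x_n$; $P$ solves MEQ-CD$(n,M)$ if for every input, $EQ_n=0$ iff $x_1=\cdots=x_n$. $C_{AD}(n,M)$ and $C_{CD}(n,M)$ are the infima of $C(P)$ over protocols solving MEQ-AD$(n,M)$, respectively MEQ-CD$(n,M)$. *)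

theory Defs
  imports Complex_Main "HOL-Library.FuncSet"
begin

text \<open>A deterministic protocol: a fixed schedule of len steps, indexed 0..len-1
  (step l here is step l+1 of the paper). In step l node tx l sends to node rx l
  the symbol msg l (x (tx l)) (symbols received so far by tx l, in order).
  Symbols are natural numbers (any finite symbol alphabet can be relabelled).\<close>
record protocol =
  len :: nat
  tx  :: "nat \<Rightarrow> nat"
  rx  :: "nat \<Rightarrow> nat"
  msg :: "nat \<Rightarrow> nat \<Rightarrow> nat list \<Rightarrow> nat"

definition wf_protocol :: "nat \<Rightarrow> protocol \<Rightarrow> bool" where
  "wf_protocol n P \<longleftrightarrow>
     (\<forall>l < len P. tx P l \<in> {1..n} \<and> rx P l \<in> {1..n} \<and> tx P l \<noteq> rx P l)"

definition received :: "protocol \<Rightarrow> nat \<Rightarrow> nat list \<Rightarrow> nat list" where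
  "received P i tr = map (\<lambda>k. tr ! k) (filter (\<lambda>k. rx P k = i) [0..<length tr])"

fun transcript :: "protocol \<Rightarrow> (nat \<Rightarrow> nat) \<Rightarrow> nat \<Rightarrow> nat list" where
  "transcript P x 0 = []"
| "transcript P x (Suc l) =
     (let tr = transcript P x l
      in tr @ [msg P l (x (tx P l)) (received P (tx P l) tr)])"

definition sym :: "protocol \<Rightarrow> (nat \<Rightarrow> nat) \<Rightarrow> nat \<Rightarrow> nat" where
  "sym P x l = transcript P x (Suc l) ! l"

definition inputs :: "nat \<Rightarrow> nat \<Rightarrow> (nat \<Rightarrow> nat) set" where
  "inputs n M = ({1..n} \<rightarrow>\<^sub>E {1..M})"

definition num_vals :: "nat \<Rightarrow> nat \<Rightarrow> protocol \<Rightarrow> nat \<Rightarrow> nat" where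
  "num_vals n M P l = card ((\<lambda>x. sym P x l) ` inputs n M)"

definition complexity :: "nat \<Rightarrow> nat \<Rightarrow> protocol \<Rightarrow> real" where
  "complexity n M P = (\<Sum>l < len P. log 2 (real (num_vals n M P l)))"

definition final_received :: "protocol \<Rightarrow> (nat \<Rightarrow> nat) \<Rightarrow> nat \<Rightarrow> nat list" where
  "final_received P x i = received P i (transcript P x (len P))"

text \<open>Output functions out i xi rcv give the bit EQ_i (True = 1, False = 0).\<close>
definition all_equal :: "nat \<Rightarrow> (nat \<Rightarrow> nat) \<Rightarrow> bool" where
  "all_equal n x \<longleftrightarrow> (\<forall>i\<in>{1..n}. \<forall>j\<in>{1..n}. x i = x j)"

definition solves_AD :: "nat \<Rightarrow> nat \<Rightarrow> protocol \<Rightarrow> bool" where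
  "solves_AD n M P \<longleftrightarrow> wf_protocol n P \<and>
     (\<exists>out :: nat \<Rightarrow> nat \<Rightarrow> nat list \<Rightarrow> bool. \<forall>x \<in> inputs n M.
        ((\<forall>i\<in>{1..n}. \<not> out i (x i) (final_received P x i)) \<longleftrightarrow> all_equal n x))"

definition solves_CD :: "nat \<Rightarrow> nat \<Rightarrow> protocol \<Rightarrow> bool" where
  "solves_CD n M P \<longleftrightarrow> wf_protocol n P \<and>
     (\<exists>out :: nat \<Rightarrow> nat list \<Rightarrow> bool. \<forall>x \<in> inputs n M.
        (\<not> out (x n) (final_received P x n) \<longleftrightarrow> all_equal n x))"

definition C_AD :: "nat \<Rightarrow> nat \<Rightarrow> real" where
  "C_AD n M = Inf (complexity n M ` {P. solves_AD n M P})"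

definition C_CD :: "nat \<Rightarrow> nat \<Rightarrow> real" where
  "C_CD n M = Inf (complexity n M ` {P. solves_CD n M P})"

end

theory Submission
  imports Defs
begin

lemma length_transcript[simp]: "length (transcript P x l) = l"
  by (induction l) (auto simp: Let_def)

lemma transcript_nth: "k < l \<Longrightarrow> transcript P x l ! k = sym P x k"
proof (induction l)
  case 0 then show ?case by simp
next
  case (Suc l)
  show ?case
  proof (cases "k = l")
    case True then show ?thesis by (simp add: sym_def)
  next
    case False
    with Suc have "k < l" by simp
    then show ?thesis using Suc by (simp add: Let_def nth_append)
  qed
qed

lemma received_transcript:
  "received P i (transcript P x l) = map (sym P x) (filter (\<lambda>k. rx P k = i) [0..<l])"
  unfolding received_def by (auto simp: transcript_nth intro!: map_cong)

lemma cut_transcript: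
  assumes H: "\<forall>k<len P. (tx P k = i \<or> rx P k = i) \<longrightarrow> sym P x k = sym P y k"
  and z: "z = (\<lambda>j. if j = i then x j else y j)"
  shows "l \<le> len P \<Longrightarrow> transcript P z l = transcript P y l"
proof (induction l)
  case 0 then show ?case by simp
next
  case (Suc l)
  then have IH: "transcript P z l = transcript P y l" and ll: "l < len P" by auto
  have recv: "received P i (transcript P x l) = received P i (transcript P y l)"
    unfolding received_transcript using H ll by (auto intro!: map_cong)
  show ?case
  proof (cases "tx P l = i")
    case True
    have "sym P x l = sym P y l" using H ll True by auto
    then have "msg P l (x i) (received P i (transcript P x l)) = msg P l (y i) (received P i (transcript P y l))"
      by (simp add: sym_def Let_def True nth_append)
    then show ?thesis using IH True recv z by (simp add: Let_def)
  next
    case False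
    then show ?thesis using IH z by (simp add: Let_def)
  qed
qed

lemma fooling:
  assumes sol: "solves_AD n M P" and n2: "n \<ge> 2" and i: "i \<in> {1..n}"
    and a: "a \<in> {1..M}" and b: "b \<in> {1..M}" and ab: "a \<noteq> b"
  shows "\<exists>k<len P. (tx P k = i \<or> rx P k = i) \<and>
     sym P (\<lambda>j\<in>{1..n}. a) k \<noteq> sym P (\<lambda>j\<in>{1..n}. b) k"
proof (rule ccontr)
  assume neg: "\<not> ?thesis"
  define x where "x = (\<lambda>j\<in>{1..n}. a)"
  define y where "y = (\<lambda>j\<in>{1..n}. b)"
  define z where "z = (\<lambda>j. if j = i then x j else y j)"
  have H: "\<forall>k<len P. (tx P k = i \<or> rx P k = i) \<longrightarrow> sym P x k = sym P y k"
    using neg unfolding x_def y_def by blast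
  from sol obtain out where out: "\<forall>w \<in> inputs n M. ((\<forall>j\<in>{1..n}. \<not> out j (w j) (final_received P w j)) \<longleftrightarrow> all_equal n w)"
    unfolding solves_AD_def by blast
  have xin: "x \<in> inputs n M" using a unfolding x_def inputs_def by auto
  have yin: "y \<in> inputs n M" using b unfolding y_def inputs_def by auto
  have zin: "z \<in> inputs n M" using a b i unfolding z_def x_def y_def inputs_def by auto
  have xe: "all_equal n x" unfolding all_equal_def x_def by auto
  have ye: "all_equal n y" unfolding all_equal_def y_def by auto
  have trz: "transcript P z (len P) = transcript P y (len P)"
    using cut_transcript[OF H z_def] by simp
  have fzy: "final_received P z j = final_received P y j" for j
    unfolding final_received_def trz ..
  have symzy: "sym P z k = sym P y k" if "k < len P" for k
    using that trz transcript_nth by metis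
  have fzx: "final_received P z i = final_received P x i"
    unfolding final_received_def received_transcript using H symzy
    by (auto intro!: map_cong)
  have "\<forall>j\<in>{1..n}. \<not> out j (z j) (final_received P z j)"
  proof
    fix j assume j: "j \<in> {1..n}"
    show "\<not> out j (z j) (final_received P z j)"
    proof (cases "j = i")
      case True
      then show ?thesis using out xin xe fzx j z_def by auto
    next
      case False
      then show ?thesis using out yin ye fzy j z_def by auto
    qed
  qed
  then have ze: "all_equal n z" using out zin by blast
  have "\<exists>j\<in>{1..n}. j \<noteq> i"
  proof (cases "i = 1")
    case True then show ?thesis using n2 by (intro bexI[of _ 2]) auto
  next
    case False then show ?thesis using n2 by (intro bexI[of _ 1]) auto
  qed
  then obtain j where j: "j \<in> {1..n}" "j \<noteq> i" by blast
  have "z i = z j" using ze i j unfolding all_equal_def by blast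
  then show False using i j ab unfolding z_def x_def y_def by simp
qed

lemma log_prod2:
  assumes "finite L" "\<And>k. k \<in> L \<Longrightarrow> (f k :: real) > 0"
  shows "log 2 (prod f L) = (\<Sum>k\<in>L. log 2 (f k))"
  using assms
proof (induction rule: finite_induct)
  case (insert a F)
  have "prod f F > 0" using insert by (intro prod_pos) auto
  moreover have "f a > 0" using insert by auto
  ultimately have "log 2 (f a * prod f F) = log 2 (f a) + log 2 (prod f F)"
    by (simp add: log_mult)
  moreover have "log 2 (prod f F) = (\<Sum>k\<in>F. log 2 (f k))" using insert by auto
  ultimately show ?case using insert
    by (simp only: prod.insert[OF insert(1,2)] sum.insert[OF insert(1,2)])
qed simp

lemma node_bound:
  assumes sol: "solves_AD n M P" and n2: "n \<ge> 2" and i: "i \<in> {1..n}" and M: "M \<ge> 1"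
  shows "log 2 (real M) \<le> (\<Sum>k\<in>{k. k < len P \<and> (tx P k = i \<or> rx P k = i)}. log 2 (real (num_vals n M P k)))"
proof -
  define L where "L = {k. k < len P \<and> (tx P k = i \<or> rx P k = i)}"
  define F where "F = (\<lambda>a. \<lambda>k\<in>L. sym P (\<lambda>j\<in>{1..n}. a) k)"
  have finL: "finite L" unfolding L_def by auto
  have inj: "inj_on F {1..M}"
  proof (rule inj_onI)
    fix a b assume a: "a \<in> {1..M}" and b: "b \<in> {1..M}" and eq: "F a = F b"
    show "a = b"
    proof (rule ccontr)
      assume "a \<noteq> b"
      then obtain k where k: "k < len P" "tx P k = i \<or> rx P k = i" "sym P (\<lambda>j\<in>{1..n}. a) k \<noteq> sym P (\<lambda>j\<in>{1..n}. b) k"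
        using fooling[OF sol n2 i a b] by blast
      have kL: "k \<in> L" using k unfolding L_def by auto
      then have "F a k = F b k" using eq by simp
      then show False using k kL unfolding F_def by simp
    qed
  qed
  have finI: "finite (inputs n M)" unfolding inputs_def by (simp add: finite_PiE)
  have sub: "F ` {1..M} \<subseteq> PiE L (\<lambda>k. (\<lambda>x. sym P x k) ` inputs n M)"
  proof
    fix f assume "f \<in> F ` {1..M}"
    then obtain a where a: "a \<in> {1..M}" "f = F a" by blast
    have "(\<lambda>j\<in>{1..n}. a) \<in> inputs n M" using a unfolding inputs_def by auto
    then show "f \<in> PiE L (\<lambda>k. (\<lambda>x. sym P x k) ` inputs n M)"
      using a unfolding F_def by auto
  qed
  have "M = card (F ` {1..M})" using card_image[OF inj] by simp
  also have "\<dots> \<le> card (PiE L (\<lambda>k. (\<lambda>x. sym P x k) ` inputs n M))"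
    by (rule card_mono[OF _ sub]) (simp add: finite_PiE finL finI)
  also have "\<dots> = (\<Prod>k\<in>L. num_vals n M P k)"
    by (simp add: card_PiE finL num_vals_def)
  finally have Mle: "real M \<le> (\<Prod>k\<in>L. real (num_vals n M P k))" by (metis of_nat_le_iff of_nat_prod)
  have pos: "num_vals n M P k > 0" for k
  proof -
    have "(\<lambda>j\<in>{1..n}. 1::nat) \<in> inputs n M" using M unfolding inputs_def by auto
    then have "inputs n M \<noteq> {}" by blast
    then show ?thesis unfolding num_vals_def using finI by (simp add: card_gt_0_iff)
  qed
  have "log 2 (real M) \<le> log 2 (\<Prod>k\<in>L. real (num_vals n M P k))"
    using Mle M by simp
  also have "\<dots> = (\<Sum>k\<in>L. log 2 (real (num_vals n M P k)))"
    using pos finL by (intro log_prod2) auto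
  finally show ?thesis unfolding L_def .
qed

lemma AD_bound:
  assumes sol: "solves_AD n M P" and n2: "n \<ge> 2" and M: "M \<ge> 1"
  shows "real n / 2 * log 2 (real M) \<le> complexity n M P"
proof -
  define f where "f k = log 2 (real (num_vals n M P k))" for k
  have wf: "wf_protocol n P" using sol solves_AD_def by blast
  have "real n * log 2 (real M) = (\<Sum>i\<in>{1..n}. log 2 (real M))" by simp
  also have "\<dots> \<le> (\<Sum>i\<in>{1..n}. \<Sum>k\<in>{k. k < len P \<and> (tx P k = i \<or> rx P k = i)}. f k)"
    by (rule sum_mono) (use node_bound[OF sol n2 _ M] in \<open>simp add: f_def\<close>)
  also have "\<dots> = (\<Sum>i\<in>{1..n}. \<Sum>k<len P. if tx P k = i \<or> rx P k = i then f k else 0)"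
  proof (rule sum.cong[OF refl])
    fix i
    have "{k. k < len P \<and> (tx P k = i \<or> rx P k = i)} = {..<len P} \<inter> {k. tx P k = i \<or> rx P k = i}" by auto
    then show "(\<Sum>k\<in>{k. k < len P \<and> (tx P k = i \<or> rx P k = i)}. f k) = (\<Sum>k<len P. if tx P k = i \<or> rx P k = i then f k else 0)"
      by (simp add: sum.inter_restrict)
  qed
  also have "\<dots> = (\<Sum>k<len P. \<Sum>i\<in>{1..n}. if tx P k = i \<or> rx P k = i then f k else 0)"
    by (rule sum.swap)
  also have "\<dots> = (\<Sum>k<len P. 2 * f k)"
  proof (rule sum.cong[OF refl])
    fix k assume "k \<in> {..<len P}"
    then have k: "tx P k \<in> {1..n}" "rx P k \<in> {1..n}" "tx P k \<noteq> rx P k"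
      using wf unfolding wf_protocol_def by auto
    have e: "{1..n} \<inter> {i. tx P k = i \<or> rx P k = i} = {tx P k, rx P k}" using k by auto
    have "(\<Sum>i\<in>{1..n}. if tx P k = i \<or> rx P k = i then f k else 0) = (\<Sum>i\<in>{1..n} \<inter> {i. tx P k = i \<or> rx P k = i}. f k)"
      using sum.inter_restrict[of "{1..n}" "\<lambda>i. f k" "{i. tx P k = i \<or> rx P k = i}"] by simp
    also have "\<dots> = (\<Sum>i\<in>{tx P k, rx P k}. f k)" unfolding e ..
    also have "\<dots> = 2 * f k" using k by simp
    finally show "(\<Sum>i\<in>{1..n}. if tx P k = i \<or> rx P k = i then f k else 0) = 2 * f k" .
  qed
  also have "\<dots> = 2 * complexity n M P"
    unfolding complexity_def f_def by (simp add: sum_distrib_left)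
  finally show ?thesis by simp
qed

definition P0 :: "nat \<Rightarrow> protocol" where
  "P0 n = \<lparr>len = n - 1, tx = (\<lambda>l. l + 1), rx = (\<lambda>l. n), msg = (\<lambda>l v r. v)\<rparr>"

lemma P0_transcript: "transcript (P0 n) x l = map (\<lambda>k. x (k+1)) [0..<l]"
  by (induction l) (auto simp: P0_def Let_def)

lemma P0_fr: "final_received (P0 n) x n = map (\<lambda>k. x (k+1)) [0..<n-1]"
proof -
  have "filter (\<lambda>k. rx (P0 n) k = n) [0..<n-1] = [0..<n-1]" by (simp add: P0_def)
  moreover have "len (P0 n) = n - 1" by (simp add: P0_def)
  ultimately show ?thesis
    unfolding final_received_def received_def P0_transcript by (auto intro!: map_cong)
qed

lemma P0_CD:
  assumes n2: "n \<ge> 2"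
  shows "solves_CD n M (P0 n)"
  unfolding solves_CD_def
proof
  show "wf_protocol n (P0 n)" unfolding wf_protocol_def P0_def by (simp add: less_diff_conv)
  define out where "out = (\<lambda>(v::nat) (r::nat list). \<not> (\<forall>u\<in>set r. u = v))"
  have "(\<not> out (x n) (final_received (P0 n) x n)) = all_equal n x" for x
  proof
    assume "\<not> out (x n) (final_received (P0 n) x n)"
    then have h: "\<forall>k<n-1. x (k+1) = x n" unfolding P0_fr out_def by simp
    have xi: "x i = x n" if "i \<in> {1..n}" for i
    proof (cases "i = n")
      case False
      have a1: "i - 1 < n - 1" using that False by (simp only: atLeastAtMost_iff) arith
      have a2: "Suc (i - 1) = i" using that by (simp only: atLeastAtMost_iff) arith
      have "x (Suc (i - 1)) = x n" using h[rule_format, OF a1] by (simp only: Suc_eq_plus1)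
      then show ?thesis by (simp only: a2)
    qed simp
    show "all_equal n x" unfolding all_equal_def
    proof (intro ballI)
      fix i j assume "i \<in> {1..n}" "j \<in> {1..n}"
      then have "x i = x n" "x j = x n" using xi by blast+
      then show "x i = x j" by simp
    qed
  next
    assume ae: "all_equal n x"
    have "x (k+1) = x n" if "k < n - 1" for k
    proof -
      have "k+1 \<in> {1..n}" using that by (simp only: atLeastAtMost_iff) arith
      moreover have "n \<in> {1..n}" using n2 by (simp only: atLeastAtMost_iff) arith
      ultimately show ?thesis using ae unfolding all_equal_def by blast
    qed
    then have h2: "\<forall>k<n-1. x (k+1) = x n" by blast
    then show "\<not> out (x n) (final_received (P0 n) x n)" unfolding P0_fr out_def by simp
  qed
  then show "\<exists>out. \<forall>x\<in>inputs n M. (\<not> out (x n) (final_received (P0 n) x n)) = all_equal n x"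
    by (intro exI[of _ out]) simp
qed

lemma CD_AD:
  assumes n1: "n \<ge> 1" and cd: "solves_CD n M P" shows "solves_AD n M P"
proof -
  obtain out where out: "\<forall>x \<in> inputs n M. (\<not> out (x n) (final_received P x n) \<longleftrightarrow> all_equal n x)"
    and wf: "wf_protocol n P" using cd unfolding solves_CD_def by blast
  define out' where "out' = (\<lambda>j v r. j = n \<and> out v r)"
  have nn: "n \<in> {1..n}" using n1 by simp
  have "((\<forall>i\<in>{1..n}. \<not> out' i (x i) (final_received P x i)) \<longleftrightarrow> all_equal n x)"
    if x: "x \<in> inputs n M" for x
  proof -
    have "(\<forall>i\<in>{1..n}. \<not> out' i (x i) (final_received P x i)) \<longleftrightarrow> \<not> out (x n) (final_received P x n)"
    proof
      assume "\<forall>i\<in>{1..n}. \<not> out' i (x i) (final_received P x i)"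
      then have "\<not> out' n (x n) (final_received P x n)" using nn by blast
      then show "\<not> out (x n) (final_received P x n)" unfolding out'_def by simp
    next
      assume "\<not> out (x n) (final_received P x n)"
      then show "\<forall>i\<in>{1..n}. \<not> out' i (x i) (final_received P x i)" unfolding out'_def by simp
    qed
    then show ?thesis using out x by blast
  qed
  then show ?thesis unfolding solves_AD_def using wf by blast
qed

theorem mainTheorem6:
  fixes n M :: nat
  assumes "n \<ge> 2" and "M \<ge> 1"
  shows "C_CD n M \<ge> C_AD n M \<and> C_AD n M \<ge> real n / 2 * log 2 (real M)"
proof -
  have n1: "n \<ge> 1" using assms(1) by simp
  have neCD: "complexity n M ` {P. solves_CD n M P} \<noteq> {}" using P0_CD[OF assms(1)] by blast
  have sub: "complexity n M ` {P. solves_CD n M P} \<subseteq> complexity n M ` {P. solves_AD n M P}"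
    using CD_AD[OF n1] by blast
  have lb: "\<And>c. c \<in> complexity n M ` {P. solves_AD n M P} \<Longrightarrow> real n / 2 * log 2 (real M) \<le> c"
    using AD_bound[OF _ assms] by blast
  have bdd: "bdd_below (complexity n M ` {P. solves_AD n M P})"
    using lb by (rule bdd_belowI)
  have neAD: "complexity n M ` {P. solves_AD n M P} \<noteq> {}" using neCD sub by blast
  have 1: "C_AD n M \<le> C_CD n M"
    unfolding C_CD_def C_AD_def by (rule cInf_superset_mono[OF neCD bdd sub])
  have 2: "real n / 2 * log 2 (real M) \<le> C_AD n M"
    unfolding C_AD_def by (rule cInf_greatest[OF neAD lb])
  show ?thesis using 1 2 by simp
qed

end
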